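(* Let $G=G_n\langle t_1,\ldots,t_k\rangle$ be a Toeplitz graph. Then the clique number satisfies $\omega(G)\le k+1$, and equality holds if and only if $t_i=it_1$ for every $i\in[k]$.
   Context: For integers $n\ge 2$, $k\ge 1$ and $1\le t_1<t_2<\cdots<t_k\le n-1$, the Toeplitz graph $G_n\langle t_1,\ldots,t_k\rangle$ is the simple graph with vertex set $[n]=\{1,\ldots,n\}$ in which two distinct vertices $i,j$ are adjacent if and only if $|i-j|\in\{t_1,\ldots,t_k\}$. $\omega(G)$ is the maximum number of vertices of a clique of $G$. *)

theory Defs
  imports Main
begin

definition toeplitz_adj :: "nat \<Rightarrow> (nat \<Rightarrow> nat) \<Rightarrow> nat \<Rightarrow> nat \<Rightarrow> bool" where
  "toeplitz_adj k t i j \<longleftrightarrow> i \<noteq> j \<and> (\<exists>l\<in>{1..k}. (if i \<le> j then j - i else i - j) = t l)"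

definition toeplitz_clique :: "nat \<Rightarrow> nat \<Rightarrow> (nat \<Rightarrow> nat) \<Rightarrow> nat set \<Rightarrow> bool" where
  "toeplitz_clique n k t S \<longleftrightarrow> S \<subseteq> {1..n} \<and>
     (\<forall>i\<in>S. \<forall>j\<in>S. i \<noteq> j \<longrightarrow> toeplitz_adj k t i j)"

definition toeplitz_omega :: "nat \<Rightarrow> nat \<Rightarrow> (nat \<Rightarrow> nat) \<Rightarrow> nat" where
  "toeplitz_omega n k t = Max {card S | S. toeplitz_clique n k t S}"

end

theory Submission
  imports Defs
begin

lemma mult_lemma:
  fixes u :: "nat \<Rightarrow> nat"
  assumes "u 0 = 0" "1 \<le> u 1"
    and "\<And>i j. 1 \<le> i \<Longrightarrow> i < j \<Longrightarrow> j \<le> k \<Longrightarrow> u i < u j"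
    and "\<And>i j. i < j \<Longrightarrow> j \<le> k \<Longrightarrow> \<exists>l\<in>{1..k}. u j - u i = u l"
  shows "\<forall>i\<le>k. u i = i * u 1"
  using assms(3,4)
proof (induction k)
  case 0
  then show ?case using assms(1) by auto
next
  case (Suc k)
  have mono: "u i \<le> u j" if "i \<le> j" "j \<le> Suc k" for i j
    using Suc.prems(1)[of i j] that assms(1) by (cases "i = j"; cases "i = 0"; auto)
  have IH: "\<forall>i\<le>k. u i = i * u 1"
  proof (rule Suc.IH)
    show "u i < u j" if "1 \<le> i" "i < j" "j \<le> k" for i j using Suc.prems(1) that by auto
    show "\<exists>l\<in>{1..k}. u j - u i = u l" if ij: "i < j" "j \<le> k" for i j
    proof -
      obtain l where l: "l \<in> {1..Suc k}" "u j - u i = u l" using Suc.prems(2)[of i j] ij by fastforce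
      have "l \<noteq> Suc k"
      proof
        assume "l = Suc k"
        have "u j \<le> u k" using mono ij by auto
        moreover have "u k < u (Suc k)" if "k \<ge> 1" using Suc.prems(1)[of k "Suc k"] that by auto
        moreover have "k = 0 \<Longrightarrow> False" using ij l by auto
        ultimately show False using l \<open>l = Suc k\<close> ij by (cases "k \<ge> 1") auto
      qed
      then show ?thesis using l by auto
    qed
  qed
  have "u (Suc k) = Suc k * u 1"
  proof (cases "k = 0")
    case True then show ?thesis by simp
  next
    case False
    obtain l where l: "l \<in> {1..Suc k}" "u (Suc k) - u k = u l" using Suc.prems(2)[of k "Suc k"] by auto
    have "u l \<ge> u 1" using mono l by auto
    have lt: "u k < u (Suc k)" using Suc.prems(1)[of k "Suc k"] False by auto
    have ge: "u (Suc k) \<ge> Suc k * u 1" using IH l \<open>u l \<ge> u 1\<close> lt by auto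
    obtain m where m: "m \<in> {1..Suc k}" "u (Suc k) - u 1 = u m" using Suc.prems(2)[of 1 "Suc k"] False by auto
    have "m \<noteq> Suc k" using m assms(2) lt mono[of 1 k] False by auto
    then have "m \<le> k" using m by auto
    then have "u m = m * u 1" using IH by auto
    have "u 1 \<le> u (Suc k)" using mono[of 1 "Suc k"] by auto
    then have "u (Suc k) = u m + u 1" using m by auto
    also have "\<dots> \<le> k * u 1 + u 1" using \<open>m \<le> k\<close> \<open>u m = m * u 1\<close> by simp
    finally show ?thesis using ge by simp
  qed
  then show ?case using IH le_Suc_eq by auto
qed

theorem theorem2p8:
  fixes n k :: nat and t :: "nat \<Rightarrow> nat"
  assumes "n \<ge> 2" and "k \<ge> 1"
    and "1 \<le> t 1" and "t k \<le> n - 1"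
    and "\<And>i j. 1 \<le> i \<Longrightarrow> i < j \<Longrightarrow> j \<le> k \<Longrightarrow> t i < t j"
  shows "toeplitz_omega n k t \<le> k + 1 \<and>
    (toeplitz_omega n k t = k + 1 \<longleftrightarrow> (\<forall>i\<in>{1..k}. t i = i * t 1))"
proof -
  define T where "T = t ` {1..k}"
  have injt: "inj_on t {1..k}"
    proof (rule linorder_inj_onI')
    fix i j assume "i \<in> {1..k}" "j \<in> {1..k}" "i < j"
    then have "t i < t j" using assms(5)[of i j] by simp
    then show "t i \<noteq> t j" by simp
  qed
  have cardT: "card T = k" unfolding T_def using card_image[OF injt] by simp
  have adj: "\<exists>l\<in>{1..k}. y - x = t l" if "toeplitz_adj k t x y" "x < y" for x y
    using that unfolding toeplitz_adj_def by auto
  have key: "inj_on (\<lambda>x. x - Min S) (S - {Min S}) \<and> (\<lambda>x. x - Min S) ` (S - {Min S}) \<subseteq> T"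
    if cl: "toeplitz_clique n k t S" and ne: "S \<noteq> {}" for S
  proof -
    have fin: "finite S" using cl unfolding toeplitz_clique_def using finite_subset by blast
    have mn: "Min S \<le> x" if "x \<in> S" for x using fin that by auto
    have "Min S \<in> S" using fin ne by auto
    show ?thesis
    proof
      show "inj_on (\<lambda>x. x - Min S) (S - {Min S})"
        by (rule inj_onI) (use mn in force)
      show "(\<lambda>x. x - Min S) ` (S - {Min S}) \<subseteq> T"
      proof
        fix z assume "z \<in> (\<lambda>x. x - Min S) ` (S - {Min S})"
        then obtain x where x: "x \<in> S" "x \<noteq> Min S" "z = x - Min S" by auto
        have "x > Min S" using mn[OF x(1)] x(2) by auto
        have "toeplitz_adj k t (Min S) x" using cl \<open>Min S \<in> S\<close> x unfolding toeplitz_clique_def by auto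
        then show "z \<in> T" using adj \<open>x > Min S\<close> x(3) unfolding T_def by auto
      qed
    qed
  qed
  have bound: "card S \<le> k + 1" if cl: "toeplitz_clique n k t S" for S
  proof (cases "S = {}")
    case True then show ?thesis by simp
  next
    case False
    have fin: "finite S" using cl unfolding toeplitz_clique_def using finite_subset by blast
    have "card (S - {Min S}) \<le> card T"
      using card_inj_on_le[of _ "S - {Min S}" T] key[OF cl False] unfolding T_def by auto
    moreover have "card S = card (S - {Min S}) + 1" proof -
      have "Min S \<in> S" using fin False by simp
      then have "card (S - {Min S}) = card S - 1" using fin by simp
      moreover have "card S > 0" using fin False by (simp add: card_gt_0_iff)
      ultimately show ?thesis by simp
    qed
    ultimately show ?thesis using cardT by simp
  qed
  define C where "C = {card S | S. toeplitz_clique n k t S}"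
  have Cfin: "finite C" by (rule finite_subset[of _ "{..k+1}"]) (use bound in \<open>auto simp: C_def\<close>)
  have Cne: "C \<noteq> {}" unfolding C_def toeplitz_clique_def by auto
  have om: "toeplitz_omega n k t = Max C" unfolding toeplitz_omega_def C_def by simp
  have le: "toeplitz_omega n k t \<le> k + 1" unfolding om using Cfin Cne bound by (auto simp: C_def)
  have dir1: "toeplitz_omega n k t = k + 1" if H: "\<forall>i\<in>{1..k}. t i = i * t 1"
  proof -
    define S where "S = (\<lambda>i. 1 + i * t 1) ` {0..k}"
    have "inj_on (\<lambda>i. 1 + i * t 1) {0..k}" by (rule inj_onI) (use assms(3) in auto)
    then have cS: "card S = k + 1" unfolding S_def by (simp add: card_image)
    have "t k = k * t 1" using bspec[OF H, of k] assms(2) by simp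
    then have sub: "S \<subseteq> {1..n}"
    proof -
      assume tk: "t k = k * t 1"
      show ?thesis unfolding S_def
      proof
        fix x assume "x \<in> (\<lambda>i. 1 + i * t 1) ` {0..k}"
        then obtain i where i: "i \<le> k" "x = 1 + i * t 1" by auto
        have "i * t 1 \<le> k * t 1" using i(1) by (rule mult_right_mono) simp
        then have "x \<le> n" using i tk assms(4) assms(1) by linarith
        then show "x \<in> {1..n}" using i by simp
      qed
    qed
    have "toeplitz_clique n k t S"
      unfolding toeplitz_clique_def
    proof (intro conjI sub ballI impI)
      fix x y assume xy: "x \<in> S" "y \<in> S" "x \<noteq> y"
      obtain i where i: "i \<le> k" "x = 1 + i * t 1" using xy(1) unfolding S_def by auto
      obtain j where j: "j \<le> k" "y = 1 + j * t 1" using xy(2) unfolding S_def by auto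
      note ij = i(1) j(1) i(2) j(2)
      show "toeplitz_adj k t x y"
        unfolding toeplitz_adj_def
      proof (intro conjI xy(3))
        show "\<exists>l\<in>{1..k}. (if x \<le> y then y - x else x - y) = t l"
        proof (cases "i \<le> j")
          case True
          then have "i < j" using ij xy(3) by (cases "i = j") auto
          have "y - x = (j - i) * t 1" using ij True by (simp add: diff_mult_distrib)
          moreover have "x \<le> y" using ij True by simp
          moreover have "t (j - i) = (j - i) * t 1" using bspec[OF H, of "j - i"] \<open>i<j\<close> ij by (simp add: Suc_leI)
          ultimately show ?thesis using \<open>i<j\<close> ij by (intro bexI[of _ "j - i"]) auto
        next
          case False
          have "x - y = (i - j) * t 1" using ij False by (simp add: diff_mult_distrib)
          moreover have "\<not> x \<le> y" using ij False assms(3) by simp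
          moreover have "t (i - j) = (i - j) * t 1" using bspec[OF H, of "i - j"] False ij by (simp add: Suc_leI)
          ultimately show ?thesis using False ij by (intro bexI[of _ "i - j"]) auto
        qed
      qed
    qed
    then have "k + 1 \<in> C" unfolding C_def using cS by (metis (mono_tags, lifting) mem_Collect_eq)
    then have "k + 1 \<le> Max C" using Cfin by auto
    then show ?thesis using le om by simp
  qed
  have dir2: "\<forall>i\<in>{1..k}. t i = i * t 1" if H: "toeplitz_omega n k t = k + 1"
  proof -
    have "k + 1 \<in> C" using Max_in[OF Cfin Cne] om H by simp
    then obtain S where cl: "toeplitz_clique n k t S" and cS: "card S = k + 1" unfolding C_def by auto
    have ne: "S \<noteq> {}" using cS by auto
    have fin: "finite S" using cl unfolding toeplitz_clique_def using finite_subset by blast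
    define a where "a = Min S"
    have aS: "a \<in> S" using fin ne a_def by auto
    have "card (S - {a}) = k" using cS aS fin by simp
    then have img: "(\<lambda>x. x - a) ` (S - {a}) = T"
    proof -
      have k1: "inj_on (\<lambda>x. x - a) (S - {a})" "(\<lambda>x. x - a) ` (S - {a}) \<subseteq> T"
        using key[OF cl ne] unfolding a_def by auto
      have "card ((\<lambda>x. x - a) ` (S - {a})) = k" using card_image[OF k1(1)] \<open>card (S - {a}) = k\<close> by simp
      moreover have "finite T" unfolding T_def by simp
      ultimately show ?thesis using card_subset_eq[OF _ k1(2)] cardT by simp
    qed
    have mn: "a \<le> x" if "x \<in> S" for x using fin that a_def by auto
    have inS: "a + t l \<in> S" if "l \<in> {1..k}" for l
    proof -
      have "t l \<in> T" using that T_def by auto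
      then obtain x where "x \<in> S" "t l = x - a" using img by auto
      then show ?thesis using mn by auto
    qed
    define u where "u = t(0 := 0)"
    have uS: "a + u i \<in> S" if "i \<le> k" for i using inS aS that by (cases "i = 0") (auto simp: u_def)
    have umono: "u i < u j" if "i < j" "j \<le> k" for i j
      using assms(5)[of i j] assms(3) assms(5)[of 1 j] that by (cases "i = 0"; cases "j = 1") (auto simp: u_def)
    have "\<forall>i\<le>k. u i = i * u 1"
    proof (rule mult_lemma)
      show "u 0 = 0" "1 \<le> u 1" using assms(3) by (auto simp: u_def)
      show "u i < u j" if "1 \<le> i" "i < j" "j \<le> k" for i j using umono that by auto
      show "\<exists>l\<in>{1..k}. u j - u i = u l" if "i < j" "j \<le> k" for i j
      proof -
        have lt: "a + u i < a + u j" using umono that by simp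
        have "toeplitz_adj k t (a + u i) (a + u j)"
          using cl uS[of i] uS[of j] that lt unfolding toeplitz_clique_def by auto
        then obtain l where "l \<in> {1..k}" "(a + u j) - (a + u i) = t l" using adj lt by blast
        then show ?thesis by (intro bexI[of _ l]) (auto simp: u_def)
      qed
    qed
    then show ?thesis by (auto simp: u_def)
  qed
  show ?thesis using le dir1 dir2 by blast
qed

end
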